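(* Let $\alpha\in\mathbb{C}$, $\beta\in\mathbb{C}\setminus\mathbb{Z}$, and let $D\in\mathrm{Der}(\mathcal{W},\mathcal{F}_\alpha\otimes\mathcal{F}_\beta)_0$ satisfy $D(L_0)=0$, $D(L_1)=c\,v_{l+1}\otimes v_{-l}$ for some $l\in\mathbb{Z}$ and $c\in\mathbb{C}$, and $D(L_{-1})=0$. Then $D=0$.
   Context: The Witt algebra $\mathcal{W}$ has basis $\{L_n\mid n\in\mathbb{Z}\}$ and bracket $[L_m,L_n]=(m-n)L_{m+n}$. $\mathcal{F}_\alpha$ has basis $\{v_n\}$ with $L_m\cdot v_n=-(\alpha m+n)v_{m+n}$; $\mathcal{F}_\alpha\otimes\mathcal{F}_\beta$ is a $\mathcal{W}$-module via $L_m\cdot(v_i\otimes v_j)=-(i+\alpha m)v_{m+i}\otimes v_j-(j+\beta m)v_i\otimes v_{m+j}$, graded by $(\mathcal{F}_\alpha\otimes\mathcal{F}_\beta)_k=\bigoplus_i\mathbb{C}\,v_i\otimes v_{k-i}$. $\mathrm{Der}(\mathcal{W},\mathcal{F}_\alpha\otimes\mathcal{F}_\beta)_0$ is the space of linear maps $D$ with $D([x,y])=x\cdot D(y)-y\cdot D(x)$ and $D(L_m)\in(\mathcal{F}_\alpha\otimes\mathcal{F}_\beta)_m$ for all $m$. *)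

theory Defs
  imports Complex_Main
begin

text \<open>Elements of the Witt algebra W are finitely supported coefficient functions
  x :: int \<Rightarrow> complex (x = sum of x n L_n). Elements of F_alpha (x) F_beta are finitely
  supported u :: int \<times> int \<Rightarrow> complex (u = sum of u(i,j) v_i (x) v_j).\<close>

definition fin_supp :: "('a \<Rightarrow> complex) \<Rightarrow> bool" where
  "fin_supp f \<longleftrightarrow> finite {a. f a \<noteq> 0}"

definition witt_L :: "int \<Rightarrow> int \<Rightarrow> complex" where
  "witt_L m = (\<lambda>k. if k = m then 1 else 0)"

definition tens_v :: "int \<Rightarrow> int \<Rightarrow> int \<times> int \<Rightarrow> complex" where
  "tens_v i j = (\<lambda>p. if p = (i, j) then 1 else 0)"

text \<open>Bracket [x,y], bilinear extension of [L_m,L_n] = (m-n) L_(m+n).\<close>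
definition witt_bracket :: "(int \<Rightarrow> complex) \<Rightarrow> (int \<Rightarrow> complex) \<Rightarrow> int \<Rightarrow> complex" where
  "witt_bracket x y = (\<lambda>k. \<Sum>m\<in>{m. x m \<noteq> 0}. x m * y (k - m) * of_int (m - (k - m)))"

text \<open>Action of L_m on the tensor module: linear extension of
  L_m (v_i (x) v_j) = -(i + alpha m) v_(m+i) (x) v_j - (j + beta m) v_i (x) v_(m+j).\<close>
definition tens_act_L :: "complex \<Rightarrow> complex \<Rightarrow> int \<Rightarrow> (int \<times> int \<Rightarrow> complex) \<Rightarrow> int \<times> int \<Rightarrow> complex" where
  "tens_act_L \<alpha> \<beta> m u = (\<lambda>(p, q).
      - (of_int (p - m) + \<alpha> * of_int m) * u (p - m, q)
      - (of_int (q - m) + \<beta> * of_int m) * u (p, q - m))"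

definition tens_act :: "complex \<Rightarrow> complex \<Rightarrow> (int \<Rightarrow> complex) \<Rightarrow> (int \<times> int \<Rightarrow> complex) \<Rightarrow> int \<times> int \<Rightarrow> complex" where
  "tens_act \<alpha> \<beta> x u = (\<lambda>p. \<Sum>m\<in>{m. x m \<noteq> 0}. x m * tens_act_L \<alpha> \<beta> m u p)"

text \<open>Der(W, F_alpha (x) F_beta)_0: linear maps D on W (values outside W irrelevant),
  landing in the module, satisfying the derivation rule and of degree 0.\<close>
definition is_der0 :: "complex \<Rightarrow> complex \<Rightarrow> ((int \<Rightarrow> complex) \<Rightarrow> (int \<times> int \<Rightarrow> complex)) \<Rightarrow> bool" where
  "is_der0 \<alpha> \<beta> D \<longleftrightarrow>
     (\<forall>x. fin_supp x \<longrightarrow> fin_supp (D x)) \<and>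
     (\<forall>a b x y. fin_supp x \<longrightarrow> fin_supp y \<longrightarrow> D (\<lambda>k. a * x k + b * y k) = (\<lambda>p. a * D x p + b * D y p)) \<and>
     (\<forall>x y. fin_supp x \<longrightarrow> fin_supp y \<longrightarrow>
        D (witt_bracket x y) = (\<lambda>p. tens_act \<alpha> \<beta> x (D y) p - tens_act \<alpha> \<beta> y (D x) p)) \<and>
     (\<forall>m i j. D (witt_L m) (i, j) \<noteq> 0 \<longrightarrow> i + j = m)"

end

theory Submission
  imports Defs
begin

lemma fin_supp_L: "fin_supp (witt_L m)"
  unfolding fin_supp_def witt_L_def by simp

lemma supp_L: "{k. witt_L m k \<noteq> 0} = {m}"
  unfolding witt_L_def by auto

lemma bracket_L: "witt_bracket (witt_L m) (witt_L n) = (\<lambda>k. of_int (m-n) * witt_L (m+n) k)"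
  unfolding witt_bracket_def supp_L by (auto simp: witt_L_def fun_eq_iff)

lemma act_L: "tens_act \<alpha> \<beta> (witt_L m) u = tens_act_L \<alpha> \<beta> m u"
  unfolding tens_act_def supp_L by (simp add: witt_L_def fun_eq_iff)

lemma act_zero: "tens_act_L \<alpha> \<beta> m (\<lambda>_. 0) = (\<lambda>_. 0)"
  unfolding tens_act_L_def by auto

lemma notint: assumes "\<beta> \<notin> \<int>" shows "of_int j - \<beta> \<noteq> 0" "of_int j + \<beta> \<noteq> 0"
proof -
  show "of_int j - \<beta> \<noteq> 0" using assms by (metis Ints_of_int eq_iff_diff_eq_0)
  show "of_int j + \<beta> \<noteq> 0"
  proof
    assume "of_int j + \<beta> = 0"
    then have "\<beta> = of_int (-j)" by (simp add: add_eq_0_iff)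
    then show False using assms by (metis Ints_of_int)
  qed
qed

lemma ker_m1:
  assumes b: "\<beta> \<notin> \<int>" and f: "fin_supp u" and k: "tens_act_L \<alpha> \<beta> (-1) u = (\<lambda>_. 0)"
  shows "u = (\<lambda>_. 0)"
proof (rule ccontr)
  assume ne: "u \<noteq> (\<lambda>_. 0)"
  define S where "S = {a. u a \<noteq> 0}"
  have fS: "finite S" using f unfolding fin_supp_def S_def .
  have neS: "S \<noteq> {}" using ne unfolding S_def by auto
  define i where "i = Max (fst ` S)"
  have "i \<in> fst ` S" unfolding i_def using fS neS by simp
  then obtain j where ij: "(i, j) \<in> S" by force
  have z: "u (i+1, j-1) = 0"
  proof (rule ccontr)
    assume "u (i+1, j-1) \<noteq> 0"
    then have "i + 1 \<in> fst ` S" unfolding S_def by force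
    then have "i + 1 \<le> i" unfolding i_def using fS by (meson Max_ge finite_imageI)
    then show False by simp
  qed
  have "tens_act_L \<alpha> \<beta> (-1) u (i, j-1) = 0" using k by simp
  then have "- (of_int j - \<beta>) * u (i, j) = 0"
    unfolding tens_act_L_def using z by (simp add: algebra_simps)
  then show False using ij notint(1)[OF b, of j] unfolding S_def by simp
qed

lemma ker_1:
  assumes b: "\<beta> \<notin> \<int>" and f: "fin_supp u" and k: "tens_act_L \<alpha> \<beta> 1 u = (\<lambda>_. 0)"
  shows "u = (\<lambda>_. 0)"
proof (rule ccontr)
  assume ne: "u \<noteq> (\<lambda>_. 0)"
  define S where "S = {a. u a \<noteq> 0}"
  have fS: "finite S" using f unfolding fin_supp_def S_def .
  have neS: "S \<noteq> {}" using ne unfolding S_def by auto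
  define i where "i = Min (fst ` S)"
  have "i \<in> fst ` S" unfolding i_def using fS neS by simp
  then obtain j where ij: "(i, j) \<in> S" by force
  have z: "u (i-1, j+1) = 0"
  proof (rule ccontr)
    assume "u (i-1, j+1) \<noteq> 0"
    then have "i - 1 \<in> fst ` S" unfolding S_def by force
    then have "i \<le> i - 1" unfolding i_def using fS by (meson Min_le finite_imageI)
    then show False by simp
  qed
  have "tens_act_L \<alpha> \<beta> 1 u (i, j+1) = 0" using k by simp
  then have "- (of_int j + \<beta>) * u (i, j) = 0"
    unfolding tens_act_L_def using z by (simp add: algebra_simps add_eq_0_iff)
  then have "of_int j + \<beta> = 0 \<or> u (i, j) = 0" by (simp only: mult_minus_left neg_equal_0_iff_equal mult_eq_0_iff)
  then show False using ij notint(2)[OF b, of j] unfolding S_def by blast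
qed

theorem lemmaL1p10:
  fixes \<alpha> \<beta> c :: complex and l :: int
    and D :: "(int \<Rightarrow> complex) \<Rightarrow> (int \<times> int \<Rightarrow> complex)"
  assumes "\<beta> \<notin> \<int>"
    and "is_der0 \<alpha> \<beta> D"
    and "D (witt_L 0) = (\<lambda>_. 0)"
    and "D (witt_L 1) = (\<lambda>p. c * tens_v (l + 1) (- l) p)"
    and "D (witt_L (-1)) = (\<lambda>_. 0)"
  shows "\<forall>x. fin_supp x \<longrightarrow> D x = (\<lambda>_. 0)"
proof -
  note d = assms(2)[unfolded is_der0_def]
  have fD: "fin_supp (D (witt_L m))" for m using d fin_supp_L by blast
  have lin: "D (\<lambda>k. a * x k + b * y k) = (\<lambda>p. a * D x p + b * D y p)"
    if "fin_supp x" "fin_supp y" for a b x y using d that by blast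
  have scal: "D (\<lambda>k. a * witt_L j k) = (\<lambda>p. a * D (witt_L j) p)" for a j
    using lin[OF fin_supp_L fin_supp_L, of a j 0 j] by simp
  have brk: "(\<lambda>p. of_int (m-n) * D (witt_L (m+n)) p) =
      (\<lambda>p. tens_act_L \<alpha> \<beta> m (D (witt_L n)) p - tens_act_L \<alpha> \<beta> n (D (witt_L m)) p)" for m n
  proof -
    have "D (witt_bracket (witt_L m) (witt_L n)) =
      (\<lambda>p. tens_act \<alpha> \<beta> (witt_L m) (D (witt_L n)) p - tens_act \<alpha> \<beta> (witt_L n) (D (witt_L m)) p)"
      using d fin_supp_L by blast
    then show ?thesis unfolding bracket_L act_L scal .
  qed
  have up: "D (witt_L (int k)) = (\<lambda>_. 0)" for k
  proof (induction k)
    case 0 then show ?case using assms(3) by simp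
  next
    case (Suc k)
    have "(\<lambda>p. of_int (int (Suc k) - (-1)) * D (witt_L (int (Suc k) + -1)) p) =
      (\<lambda>p. tens_act_L \<alpha> \<beta> (int (Suc k)) (D (witt_L (-1))) p - tens_act_L \<alpha> \<beta> (-1) (D (witt_L (int (Suc k)))) p)"
      by (rule brk)
    then have "tens_act_L \<alpha> \<beta> (-1) (D (witt_L (int (Suc k)))) = (\<lambda>_. 0)"
      using Suc assms(5) by (simp add: act_zero fun_eq_iff)
    then show ?case using ker_m1[OF assms(1) fD] by blast
  qed
  have down: "D (witt_L (- int k)) = (\<lambda>_. 0)" for k
  proof (induction k)
    case 0 then show ?case using assms(3) by simp
  next
    case (Suc k)
    have "(\<lambda>p. of_int (- int (Suc k) - 1) * D (witt_L (- int (Suc k) + 1)) p) =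
      (\<lambda>p. tens_act_L \<alpha> \<beta> (- int (Suc k)) (D (witt_L 1)) p - tens_act_L \<alpha> \<beta> 1 (D (witt_L (- int (Suc k)))) p)"
      by (rule brk)
    moreover have "- int (Suc k) + 1 = - int k" by simp
    moreover have "D (witt_L 1) = (\<lambda>_. 0)" using up[of 1] by simp
    ultimately have "tens_act_L \<alpha> \<beta> 1 (D (witt_L (- int (Suc k)))) = (\<lambda>_. 0)"
      using Suc by (simp add: act_zero fun_eq_iff)
    then show ?case using ker_1[OF assms(1) fD] by blast
  qed
  have allL: "D (witt_L m) = (\<lambda>_. 0)" for m
  proof (cases "m \<ge> 0")
    case True then show ?thesis using up[of "nat m"] by simp
  next
    case False then show ?thesis using down[of "nat (-m)"] by simp
  qed
  have fin: "\<forall>x. {k. x k \<noteq> 0} \<subseteq> S \<longrightarrow> D x = (\<lambda>_. 0)" if "finite S" for S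
    using that
  proof (induction S rule: finite_induct)
    case empty
    show ?case
    proof (intro allI impI)
      fix x :: "int \<Rightarrow> complex" assume "{k. x k \<noteq> 0} \<subseteq> {}"
      then have "x = (\<lambda>k. 0 * witt_L 0 k)" by auto
      then show "D x = (\<lambda>_. 0)" using scal[of 0 0] by simp
    qed
  next
    case (insert s S)
    show ?case
    proof (intro allI impI)
      fix x :: "int \<Rightarrow> complex" assume sub: "{k. x k \<noteq> 0} \<subseteq> insert s S"
      define x' where "x' = x(s := 0)"
      have s': "{k. x' k \<noteq> 0} \<subseteq> S" using sub unfolding x'_def by auto
      have fx': "fin_supp x'" unfolding fin_supp_def using s' insert(1) finite_subset by blast
      have ex: "x = (\<lambda>k. 1 * x' k + x s * witt_L s k)"
        unfolding x'_def witt_L_def by auto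
      have "D x = (\<lambda>p. 1 * D x' p + x s * D (witt_L s) p)"
        by (subst ex, rule lin[OF fx' fin_supp_L])
      then show "D x = (\<lambda>_. 0)" using insert(3) s' allL by simp
    qed
  qed
  show ?thesis
  proof (intro allI impI)
    fix x :: "int \<Rightarrow> complex" assume "fin_supp x"
    then show "D x = (\<lambda>_. 0)" using fin[of "{k. x k \<noteq> 0}"] unfolding fin_supp_def by blast
  qed
qed

end
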